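(* Let $\mathcal{J}$ be an adapted almost tangent structure on $T^*M$, $\rho$ a $\mathcal{J}$-regular vector field, and let $\mathcal{N}$ be the canonical nonlinear connection induced by $\rho$ (so $h-v=-\mathcal{L}_\rho\mathcal{J}$). Let $\nabla$ be the dynamical covariant derivative induced by $\rho$ and $\mathbb{F}=h\circ\mathcal{L}_\rho h-\mathcal{J}$. Then $\nabla\mathcal{J}=0$ and $\nabla\mathbb{F}=0$.
   Context: $M$ is a smooth $n$-manifold and $T^*M$ its cotangent bundle, $VT^*M$ the vertical distribution (spanned locally by $\frac{\partial}{\partial p_i}$ in coordinates $(x^i,p_i)$). A nonlinear connection is a distribution supplementary to $VT^*M$, with horizontal and vertical projectors $h,v$. An adapted almost tangent structure is a $(1,1)$-tensor $\mathcal{J}$ of rank $n$ with $\mathcal{J}^2=0$, $\operatorname{Im}\mathcal{J}=\operatorname{Ker}\mathcal{J}=VT^*M$. A vector field $\rho$ is $\mathcal{J}$-regular if $\mathcal{J}[\rho,\mathcal{J}X]=-\mathcal{J}X$ for all vector fields $X$. $\mathcal{L}_\rho$ denotes $X\mapsto[\rho,X]$ on vector fields, and for a $(1,1)$-tensor $L$, $\mathcal{L}_\rho L=\mathcal{L}_\rho\circ L-L\circ\mathcal{L}_\rho$. The dynamical covariant derivative induced by $\rho$ is the unique tensor derivation $\nabla$ on $T^*M\setminus\{0\}$ ($\mathbb{R}$-linear, type preserving, Leibniz rule for tensor products, commuting with contractions) with $\nabla f=\rho(f)$ on functions and $\nabla X=h[\rho,hX]+v[\rho,vX]$ on vector fields;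 on a $(1,1)$-tensor $T$ it acts by $\nabla T=\nabla\circ T-T\circ\nabla$. *)

theory Defs
  imports "HOL-Analysis.Analysis"
begin

text \<open>Local coordinate model of the cotangent bundle: a chart domain of T*M is an
open set S of pairs (x,p) in R^n x R^n.  Tangent vectors at a point are again pairs
(dx,dp); vector fields are maps S -> R^n x R^n; the vertical distribution is spanned
by the d/dp_i, i.e. consists of the vectors with vanishing x-component.\<close>

type_synonym ('n) cot = "(real^'n::finite) \<times> (real^'n)"
type_synonym 'n vf = "'n cot \<Rightarrow> 'n cot"
type_synonym 'n tens11 = "'n cot \<Rightarrow> 'n cot \<Rightarrow> 'n cot"

definition vertical :: "('n::finite) cot set" where
  "vertical = {u. fst u = 0}"

fun iter_deriv :: "('a::real_normed_vector \<Rightarrow> 'b::real_normed_vector) \<Rightarrow> 'a list \<Rightarrow> 'a \<Rightarrow> 'b" where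
  "iter_deriv f [] = f"
| "iter_deriv f (w # ws) = (\<lambda>z. frechet_derivative (iter_deriv f ws) (at z) w)"

definition smooth_on :: "'a::real_normed_vector set \<Rightarrow> ('a \<Rightarrow> 'b::real_normed_vector) \<Rightarrow> bool" where
  "smooth_on S f \<longleftrightarrow> (\<forall>ws. \<forall>z\<in>S. iter_deriv f ws differentiable (at z))"

definition smooth_tensor11 :: "('n::finite) cot set \<Rightarrow> 'n tens11 \<Rightarrow> bool" where
  "smooth_tensor11 S T \<longleftrightarrow> (\<forall>z\<in>S. linear (T z)) \<and> (\<forall>u. smooth_on S (\<lambda>z. T z u))"

definition app11 :: "('n::finite) tens11 \<Rightarrow> 'n vf \<Rightarrow> 'n vf" where
  "app11 T X = (\<lambda>z. T z (X z))"

definition lie :: "('n::finite) vf \<Rightarrow> 'n vf \<Rightarrow> 'n vf" where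
  "lie X Y = (\<lambda>z. frechet_derivative Y (at z) (X z) - frechet_derivative X (at z) (Y z))"

definition adapted_almost_tangent :: "('n::finite) cot set \<Rightarrow> 'n tens11 \<Rightarrow> bool" where
  "adapted_almost_tangent S J \<longleftrightarrow> smooth_tensor11 S J \<and>
     (\<forall>z\<in>S. J z \<circ> J z = (\<lambda>_. 0)
        \<and> range (J z) = vertical \<and> {u. J z u = 0} = vertical
        \<and> dim (range (J z)) = CARD('n))"

definition J_regular :: "('n::finite) cot set \<Rightarrow> 'n tens11 \<Rightarrow> 'n vf \<Rightarrow> bool" where
  "J_regular S J \<rho> \<longleftrightarrow> (\<forall>X. smooth_on S X \<longrightarrow>
     (\<forall>z\<in>S. J z (lie \<rho> (app11 J X) z) = - J z (X z)))"

definition lie_op :: "('n::finite) vf \<Rightarrow> ('n vf \<Rightarrow> 'n vf) \<Rightarrow> 'n vf \<Rightarrow> 'n vf" where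
  "lie_op \<rho> L X = (\<lambda>z. lie \<rho> (L X) z - L (lie \<rho> X) z)"

text \<open>Canonical nonlinear connection induced by rho: h + v = id, h - v = - L_rho J.\<close>
definition hproj :: "('n::finite) tens11 \<Rightarrow> 'n vf \<Rightarrow> 'n vf \<Rightarrow> 'n vf" where
  "hproj J \<rho> X = (\<lambda>z. (1/2) *\<^sub>R (X z - lie_op \<rho> (app11 J) X z))"

definition vproj :: "('n::finite) tens11 \<Rightarrow> 'n vf \<Rightarrow> 'n vf \<Rightarrow> 'n vf" where
  "vproj J \<rho> X = (\<lambda>z. (1/2) *\<^sub>R (X z + lie_op \<rho> (app11 J) X z))"

definition dyn_cov :: "('n::finite) tens11 \<Rightarrow> 'n vf \<Rightarrow> 'n vf \<Rightarrow> 'n vf" where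
  "dyn_cov J \<rho> X = (\<lambda>z. hproj J \<rho> (lie \<rho> (hproj J \<rho> X)) z + vproj J \<rho> (lie \<rho> (vproj J \<rho> X)) z)"

definition dyn_cov11 :: "('n::finite) tens11 \<Rightarrow> 'n vf \<Rightarrow> ('n vf \<Rightarrow> 'n vf) \<Rightarrow> 'n vf \<Rightarrow> 'n vf" where
  "dyn_cov11 J \<rho> T X = (\<lambda>z. dyn_cov J \<rho> (T X) z - T (dyn_cov J \<rho> X) z)"

definition Fop :: "('n::finite) tens11 \<Rightarrow> 'n vf \<Rightarrow> 'n vf \<Rightarrow> 'n vf" where
  "Fop J \<rho> X = (\<lambda>z. hproj J \<rho> (lie_op \<rho> (hproj J \<rho>) X) z - J z (X z))"

end

theory Submission
  imports Defs
begin

abbreviation DD :: "('a::real_normed_vector \<Rightarrow> 'b::real_normed_vector) \<Rightarrow> 'a \<Rightarrow> 'a \<Rightarrow> 'b" where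
  "DD f w \<equiv> (\<lambda>z. frechet_derivative f (at z) w)"

lemma fd_cong:
  assumes "open S" "z \<in> S" "\<And>y. y \<in> S \<Longrightarrow> f y = g y"
  shows "frechet_derivative f (at z) = frechet_derivative g (at z)"
proof -
  have "\<And>D. (f has_derivative D) (at z) \<longleftrightarrow> (g has_derivative D) (at z)"
    using has_derivative_transform_within_open[OF _ assms(1,2)] assms(3) by metis
  then show ?thesis unfolding frechet_derivative_def by simp
qed

lemma diff_cong:
  assumes "open S" "z \<in> S" "\<And>y. y \<in> S \<Longrightarrow> f y = g y" "f differentiable (at z)"
  shows "g differentiable (at z)"
  using assms has_derivative_transform_within_open unfolding differentiable_def by metis

lemma iter_deriv_cong:
  assumes "open S" "\<And>y. y \<in> S \<Longrightarrow> f y = g y"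
  shows "z \<in> S \<Longrightarrow> iter_deriv f ws z = iter_deriv g ws z"
proof (induction ws arbitrary: z)
  case Nil then show ?case using assms by simp
next
  case (Cons w ws) then show ?case using fd_cong[OF assms(1) Cons(2), of "iter_deriv f ws" "iter_deriv g ws"] by simp
qed

lemma smooth_cong:
  assumes "open S" "smooth_on S f" "\<And>y. y \<in> S \<Longrightarrow> f y = g y"
  shows "smooth_on S g"
  unfolding smooth_on_def
proof (intro allI ballI)
  fix ws z assume z: "z \<in> S"
  show "iter_deriv g ws differentiable at z"
  proof -
    have e: "\<And>y. y \<in> S \<Longrightarrow> iter_deriv f ws y = iter_deriv g ws y"
      by (rule iter_deriv_cong[OF assms(1)]) (use assms(3) in auto)
    show ?thesis
      using diff_cong[OF assms(1) z, of "iter_deriv f ws" "iter_deriv g ws"] e assms(2) z unfolding smooth_on_def by blast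
  qed
qed

lemma iter_deriv_snoc: "iter_deriv f (ws @ [w]) = iter_deriv (DD f w) ws"
  by (induction ws) auto

lemma smooth_D: "smooth_on S f \<Longrightarrow> smooth_on S (DD f w)"
  unfolding smooth_on_def by (metis iter_deriv_snoc)

lemma smooth_diff: "smooth_on S f \<Longrightarrow> z \<in> S \<Longrightarrow> f differentiable (at z)"
  unfolding smooth_on_def by (metis iter_deriv.simps(1))

lemma smooth_coinduct:
  assumes "P f"
    and step: "\<And>f. P f \<Longrightarrow> (\<forall>z\<in>S. f differentiable (at z)) \<and> (\<forall>w. P (DD f w))"
  shows "smooth_on S f"
proof -
  have "\<forall>f. P f \<longrightarrow> (\<forall>z\<in>S. iter_deriv f ws differentiable (at z))" for ws
  proof (induction ws rule: rev_induct)
    case Nil then show ?case using step by simp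
  next
    case (snoc w ws) then show ?case using step by (simp add: iter_deriv_snoc)
  qed
  then show ?thesis using assms(1) unfolding smooth_on_def by blast
qed

lemma fd_const: "frechet_derivative (\<lambda>_. c) (at z) = (\<lambda>_. 0)"
  by (metis frechet_derivative_at has_derivative_const)

lemma smooth_const: "smooth_on S (\<lambda>_. c)"
proof -
  have "\<exists>c. f = (\<lambda>_. c) \<Longrightarrow> (\<forall>z\<in>S. f differentiable (at z)) \<and> (\<forall>w. \<exists>c. DD f w = (\<lambda>_. c))" for f
    by (auto simp: fd_const)
  then show ?thesis by (intro smooth_coinduct[of "\<lambda>f. \<exists>c. f = (\<lambda>_. c)"]) auto
qed

inductive bprod for S :: "'a::real_normed_vector set" and pr :: "'b::real_normed_vector \<Rightarrow> 'c::real_normed_vector \<Rightarrow> 'd::real_normed_vector" where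
  bp1: "smooth_on S f \<Longrightarrow> smooth_on S g \<Longrightarrow> bprod S pr (\<lambda>z. pr (f z) (g z))"
| bp2: "bprod S pr a \<Longrightarrow> bprod S pr b \<Longrightarrow> bprod S pr (\<lambda>z. a z + b z)"
| bp3: "bprod S pr a \<Longrightarrow> (\<And>z. z \<in> S \<Longrightarrow> a z = b z) \<Longrightarrow> bprod S pr b"

lemma fdw0: "f differentiable (at z) \<Longrightarrow> (f has_derivative frechet_derivative f (at z)) (at z)"
  using frechet_derivative_works by blast

lemma bprod_step:
  assumes "open S" "bounded_bilinear pr"
  shows "bprod S pr h \<Longrightarrow> (\<forall>z\<in>S. h differentiable (at z)) \<and> (\<forall>w. bprod S pr (DD h w))"
proof (induction rule: bprod.induct)
  case (bp1 f g)
  have d: "((\<lambda>z. pr (f z) (g z)) has_derivative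
      (\<lambda>w. pr (f z) (DD g w z) + pr (DD f w z) (g z))) (at z)" if z: "z \<in> S" for z
    using bounded_bilinear.FDERIV[OF assms(2) fdw0[OF smooth_diff[OF bp1(1) z]] fdw0[OF smooth_diff[OF bp1(2) z]]] .
  show ?case
  proof (intro conjI ballI allI)
    fix z assume "z \<in> S" then show "(\<lambda>z. pr (f z) (g z)) differentiable at z"
      using d differentiableI by blast
  next
    fix w
    have "bprod S pr (\<lambda>z. pr (f z) (DD g w z) + pr (DD f w z) (g z))"
      by (intro bprod.bp2 bprod.bp1 smooth_D bp1)
    moreover have "pr (f z) (DD g w z) + pr (DD f w z) (g z) = DD (\<lambda>z. pr (f z) (g z)) w z" if "z \<in> S" for z
      using fun_cong[OF frechet_derivative_at[OF d[OF that]], of w] by simp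
    ultimately show "bprod S pr (DD (\<lambda>z. pr (f z) (g z)) w)"
      by (rule bp3)
  qed
next
  case (bp2 a b)
  have d: "((\<lambda>z. a z + b z) has_derivative
      (\<lambda>w. DD a w z + DD b w z)) (at z)" if z: "z \<in> S" for z
    using has_derivative_add[OF fdw0 fdw0, of a z b] bp2 z by simp
  show ?case
  proof (intro conjI ballI allI)
    fix z assume "z \<in> S" then show "(\<lambda>z. a z + b z) differentiable at z"
      using d differentiableI by blast
  next
    fix w
    have "bprod S pr (\<lambda>z. DD a w z + DD b w z)"
      using bp2 by (intro bprod.bp2) auto
    moreover have "DD a w z + DD b w z = DD (\<lambda>z. a z + b z) w z" if "z \<in> S" for z
      using fun_cong[OF frechet_derivative_at[OF d[OF that]], of w] by simp
    ultimately show "bprod S pr (DD (\<lambda>z. a z + b z) w)"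
      by (rule bp3)
  qed
next
  case (bp3 a b)
  show ?case
  proof (intro conjI ballI allI)
    fix z assume z: "z \<in> S" then show "b differentiable at z"
      using diff_cong[OF assms(1) z, of a b] bp3 by blast
  next
    fix w
    have i: "bprod S pr (DD a w)" using bp3.IH by blast
    have e: "DD a w z = DD b w z" if "z \<in> S" for z
      using fd_cong[OF assms(1) that, of a b] bp3 by simp
    show "bprod S pr (DD b w)" using bprod.bp3[OF i e] by simp
  qed
qed

lemma bprod_smooth: "open S \<Longrightarrow> bounded_bilinear pr \<Longrightarrow> bprod S pr h \<Longrightarrow> smooth_on S h"
  by (rule smooth_coinduct[of "bprod S pr"]) (auto dest: bprod_step)

lemma smooth_prod: "open S \<Longrightarrow> bounded_bilinear pr \<Longrightarrow> smooth_on S f \<Longrightarrow> smooth_on S g \<Longrightarrow>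
   smooth_on S (\<lambda>z. pr (f z) (g z))"
  by (rule bprod_smooth) (auto intro: bp1)

lemma smooth_scaleR: "open S \<Longrightarrow> smooth_on S f \<Longrightarrow> smooth_on S (\<lambda>z. c *\<^sub>R f z)"
  using smooth_prod[OF _ bounded_bilinear_scaleR, of S "\<lambda>_. c" f] smooth_const by blast

lemma smooth_add: assumes "open S" "smooth_on S f" "smooth_on S g" shows "smooth_on S (\<lambda>z. f z + g z)"
proof -
  have "bprod S scaleR (\<lambda>z. (1::real) *\<^sub>R f z + (1::real) *\<^sub>R g z)"
    using assms by (intro bp1 bp2 smooth_const)
  then show ?thesis using bprod_smooth[OF assms(1) bounded_bilinear_scaleR] by simp
qed

lemma smooth_minus: assumes "open S" "smooth_on S f" "smooth_on S g" shows "smooth_on S (\<lambda>z. f z - g z)"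
  using smooth_add[OF assms(1,2) smooth_scaleR[OF assms(1,3), of "-1"]] by simp

lemma smooth_sum: assumes "open S" "finite A" "\<And>i. i \<in> A \<Longrightarrow> smooth_on S (F i)"
  shows "smooth_on S (\<lambda>z. \<Sum>i\<in>A. F i z)"
  using assms(2,3)
proof (induction A rule: finite_induct)
  case empty then show ?case by (simp add: smooth_const)
next
  case (insert x A)
  have e: "(\<lambda>z. \<Sum>i\<in>insert x A. F i z) = (\<lambda>z. F x z + (\<Sum>i\<in>A. F i z))"
    using insert(1,2) by simp
  show ?case unfolding e by (rule smooth_add[OF assms(1)]) (use insert in auto)
qed

lemma smooth_fd:
  fixes f :: "'a::euclidean_space \<Rightarrow> 'b::real_normed_vector"
  assumes "open S" "smooth_on S f" "smooth_on S g"
  shows "smooth_on S (\<lambda>z. frechet_derivative f (at z) (g z))"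
proof -
  have sm: "smooth_on S (\<lambda>z. \<Sum>b\<in>Basis. (g z \<bullet> b) *\<^sub>R DD f b z)"
    by (rule smooth_sum[OF assms(1) finite_Basis],
        rule smooth_prod[OF assms(1) bounded_bilinear_scaleR, OF smooth_prod[OF assms(1) bounded_bilinear_inner, OF assms(3) smooth_const] smooth_D[OF assms(2)]])
  have eq: "(\<Sum>b\<in>Basis. (g z \<bullet> b) *\<^sub>R DD f b z) = frechet_derivative f (at z) (g z)" if "z \<in> S" for z
  proof -
    have "linear (frechet_derivative f (at z))"
      using smooth_diff[OF assms(2) that] frechet_derivative_works has_derivative_linear by blast
    then have "frechet_derivative f (at z) (\<Sum>b\<in>Basis. (g z \<bullet> b) *\<^sub>R b) = (\<Sum>b\<in>Basis. (g z \<bullet> b) *\<^sub>R DD f b z)"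
      by (simp add: linear_sum linear_scale)
    then show ?thesis by (simp add: euclidean_representation)
  qed
  show ?thesis by (rule smooth_cong[OF assms(1) sm]) (simp add: eq)
qed

definition eqS :: "'a set \<Rightarrow> ('a \<Rightarrow> 'b) \<Rightarrow> ('a \<Rightarrow> 'b) \<Rightarrow> bool" where
  "eqS S f g \<longleftrightarrow> (\<forall>z\<in>S. f z = g z)"

locale setting =
  fixes S :: "'n::finite cot set" and J :: "'n tens11" and \<rho> :: "'n vf"
  assumes opn: "open S" and aat: "adapted_almost_tangent S J"
    and rsm: "smooth_on S \<rho>" and reg: "J_regular S J \<rho>"
begin

lemma Jlin: "z \<in> S \<Longrightarrow> linear (J z)"
  using aat unfolding adapted_almost_tangent_def smooth_tensor11_def by blast

lemma Jsm: "smooth_on S (\<lambda>z. J z u)"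
  using aat unfolding adapted_almost_tangent_def smooth_tensor11_def by blast

lemma JJ: "z \<in> S \<Longrightarrow> J z (J z u) = 0"
  using aat unfolding adapted_almost_tangent_def by (metis comp_apply)

lemma Jker: "z \<in> S \<Longrightarrow> J z u = 0 \<Longrightarrow> \<exists>w. J z w = u"
proof -
  assume z: "z \<in> S" and u: "J z u = 0"
  have "u \<in> {u. J z u = 0}" using u by simp
  then have "u \<in> range (J z)" using aat z unfolding adapted_almost_tangent_def by blast
  then show ?thesis by auto
qed

lemma J_expand: "z \<in> S \<Longrightarrow> J z u = (\<Sum>b\<in>Basis. (u \<bullet> b) *\<^sub>R J z b)"
proof -
  assume z: "z \<in> S"
  have "J z u = J z (\<Sum>b\<in>Basis. (u \<bullet> b) *\<^sub>R b)" by (simp add: euclidean_representation)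
  also have "\<dots> = (\<Sum>b\<in>Basis. (u \<bullet> b) *\<^sub>R J z b)" using Jlin[OF z] by (simp add: linear_sum linear_scale)
  finally show ?thesis .
qed

lemma app11_smooth: "smooth_on S X \<Longrightarrow> smooth_on S (app11 J X)"
proof -
  assume X: "smooth_on S X"
  have "smooth_on S (\<lambda>z. \<Sum>b\<in>Basis. (X z \<bullet> b) *\<^sub>R J z b)"
    by (rule smooth_sum[OF opn finite_Basis],
        rule smooth_prod[OF opn bounded_bilinear_scaleR, OF smooth_prod[OF opn bounded_bilinear_inner, OF X smooth_const] Jsm])
  then show ?thesis by (rule smooth_cong[OF opn]) (simp add: app11_def J_expand)
qed

lemma lie_smooth: "smooth_on S X \<Longrightarrow> smooth_on S (lie \<rho> X)"
  unfolding lie_def using opn rsm by (intro smooth_minus smooth_fd) auto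

lemma lie_cong: "z \<in> S \<Longrightarrow> eqS S X Y \<Longrightarrow> lie \<rho> X z = lie \<rho> Y z"
  unfolding lie_def eqS_def using fd_cong[OF opn, of z X Y] by simp

lemma fdw: "smooth_on S X \<Longrightarrow> z \<in> S \<Longrightarrow> (X has_derivative frechet_derivative X (at z)) (at z)"
  using smooth_diff frechet_derivative_works by blast

lemma lie_lin:
  assumes "smooth_on S x" "smooth_on S y" "z \<in> S"
  shows "lie \<rho> (\<lambda>z. a *\<^sub>R x z + b *\<^sub>R y z) z = a *\<^sub>R lie \<rho> x z + b *\<^sub>R lie \<rho> y z"
proof -
  have hd: "((\<lambda>z. a *\<^sub>R x z + b *\<^sub>R y z) has_derivative
     (\<lambda>w. a *\<^sub>R frechet_derivative x (at z) w + b *\<^sub>R frechet_derivative y (at z) w)) (at z)"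
    using fdw[OF assms(1,3)] fdw[OF assms(2,3)] by (auto intro!: derivative_eq_intros)
  have d: "frechet_derivative (\<lambda>z. a *\<^sub>R x z + b *\<^sub>R y z) (at z) =
     (\<lambda>w. a *\<^sub>R frechet_derivative x (at z) w + b *\<^sub>R frechet_derivative y (at z) w)"
    using frechet_derivative_at[OF hd] by simp
  have l: "linear (frechet_derivative \<rho> (at z))"
    using fdw[OF rsm assms(3)] has_derivative_linear by blast
  show ?thesis unfolding lie_def d using l
    by (simp add: linear_add linear_scale algebra_simps)
qed

definition rS :: "'n vf \<Rightarrow> 'n vf" where "rS X = (\<lambda>z. if z \<in> S then X z else 0)"
definition V :: "'n vf set" where "V = {x. smooth_on S x \<and> (\<forall>z. z \<notin> S \<longrightarrow> x z = 0)}"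
definition Lr :: "'n vf \<Rightarrow> 'n vf" where "Lr X = rS (lie \<rho> X)"
definition Jr :: "'n vf \<Rightarrow> 'n vf" where "Jr X = rS (app11 J X)"

lemma V_smooth: "x \<in> V \<Longrightarrow> smooth_on S x" unfolding V_def by simp
lemma V_zero: "x \<in> V \<Longrightarrow> z \<notin> S \<Longrightarrow> x z = 0" unfolding V_def mem_Collect_eq by blast

lemma rS_V: "smooth_on S X \<Longrightarrow> rS X \<in> V"
proof -
  assume X: "smooth_on S X"
  have "smooth_on S (rS X)" by (rule smooth_cong[OF opn X]) (simp add: rS_def)
  then show ?thesis unfolding V_def by (simp add: rS_def)
qed

lemma V_I: "smooth_on S x \<Longrightarrow> (\<And>z. z \<notin> S \<Longrightarrow> x z = 0) \<Longrightarrow> x \<in> V"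
  unfolding V_def by blast

lemma V_add[simp]: "x \<in> V \<Longrightarrow> y \<in> V \<Longrightarrow> (\<lambda>z. x z + y z) \<in> V"
  by (rule V_I, rule smooth_add[OF opn V_smooth V_smooth]) (auto simp: V_zero)
lemma V_diff[simp]: "x \<in> V \<Longrightarrow> y \<in> V \<Longrightarrow> (\<lambda>z. x z - y z) \<in> V"
  by (rule V_I, rule smooth_minus[OF opn V_smooth V_smooth]) (auto simp: V_zero)
lemma V_scale[simp]: "x \<in> V \<Longrightarrow> (\<lambda>z. c *\<^sub>R x z) \<in> V"
  by (rule V_I, rule smooth_scaleR[OF opn V_smooth]) (auto simp: V_zero)
lemma V_neg[simp]: "x \<in> V \<Longrightarrow> (\<lambda>z. - x z) \<in> V"
  using V_scale[of x "-1"] by simp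
lemma V_0[simp]: "(\<lambda>z. 0) \<in> V"
  by (rule V_I, rule smooth_const) auto

lemma Lr_V[simp]: "x \<in> V \<Longrightarrow> Lr x \<in> V"
  unfolding Lr_def by (rule rS_V, rule lie_smooth, rule V_smooth)
lemma Jr_V[simp]: "x \<in> V \<Longrightarrow> Jr x \<in> V"
  unfolding Jr_def by (rule rS_V, rule app11_smooth, rule V_smooth)

lemma Lr_lin0:
  assumes "x \<in> V" "y \<in> V"
  shows "Lr (\<lambda>z. a *\<^sub>R x z + b *\<^sub>R y z) = (\<lambda>z. a *\<^sub>R Lr x z + b *\<^sub>R Lr y z)"
  unfolding Lr_def rS_def using lie_lin[OF V_smooth[OF assms(1)] V_smooth[OF assms(2)]] by auto

lemma Lr_lin[simp]:
  assumes "x \<in> V" "y \<in> V"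
  shows "Lr (\<lambda>z. x z + y z) = (\<lambda>z. Lr x z + Lr y z)"
    "Lr (\<lambda>z. x z - y z) = (\<lambda>z. Lr x z - Lr y z)"
  using Lr_lin0[OF assms, of 1 1] Lr_lin0[OF assms, of 1 "-1"] by simp_all

lemma Lr_lin1[simp]:
  assumes "x \<in> V"
  shows "Lr (\<lambda>z. c *\<^sub>R x z) = (\<lambda>z. c *\<^sub>R Lr x z)"
    "Lr (\<lambda>z. - x z) = (\<lambda>z. - Lr x z)"
  using Lr_lin0[OF assms assms, of c 0] Lr_lin0[OF assms assms, of "-1" 0] by simp_all

lemma Lr_0[simp]: "Lr (\<lambda>z. 0) = (\<lambda>z. 0)"
  using Lr_lin0[OF V_0 V_0, of 0 0] by simp

lemma Jr_lin0:
  shows "Jr (\<lambda>z. a *\<^sub>R x z + b *\<^sub>R y z) = (\<lambda>z. a *\<^sub>R Jr x z + b *\<^sub>R Jr y z)"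
proof
  fix z show "Jr (\<lambda>z. a *\<^sub>R x z + b *\<^sub>R y z) z = a *\<^sub>R Jr x z + b *\<^sub>R Jr y z"
    unfolding Jr_def rS_def app11_def using Jlin[of z] by (simp add: linear_add linear_scale)
qed

lemma Jr_lin[simp]:
  shows "Jr (\<lambda>z. x z + y z) = (\<lambda>z. Jr x z + Jr y z)"
    "Jr (\<lambda>z. x z - y z) = (\<lambda>z. Jr x z - Jr y z)"
    "Jr (\<lambda>z. c *\<^sub>R x z) = (\<lambda>z. c *\<^sub>R Jr x z)"
    "Jr (\<lambda>z. - x z) = (\<lambda>z. - Jr x z)"
  using Jr_lin0[of 1 x 1 y] Jr_lin0[of 1 x "-1" y] Jr_lin0[of c x 0 x]
    Jr_lin0[of "-1" x 0 x] by simp_all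

lemma Jr_0[simp]: "Jr (\<lambda>z. 0) = (\<lambda>z. 0)"
  using Jr_lin0[of 0 "\<lambda>z. 0" 0 "\<lambda>z. 0"] by simp

lemma JrJr[simp]: "Jr (Jr x) = (\<lambda>z. 0)"
proof
  fix z show "Jr (Jr x) z = 0" unfolding Jr_def rS_def app11_def by (simp add: JJ)
qed

lemma JLJ[simp]: "x \<in> V \<Longrightarrow> Jr (Lr (Jr x)) = (\<lambda>z. - Jr x z)"
proof (rule ext)
  fix z assume x: "x \<in> V"
  show "Jr (Lr (Jr x)) z = - Jr x z"
  proof (cases "z \<in> S")
    case True
    have "lie \<rho> (Jr x) z = lie \<rho> (app11 J x) z"
      by (rule lie_cong[OF True]) (simp add: eqS_def Jr_def rS_def)
    moreover have "J z (lie \<rho> (app11 J x) z) = - J z (x z)"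
      using reg True V_smooth[OF x] unfolding J_regular_def by blast
    ultimately show ?thesis using True
      by (simp add: Jr_def Lr_def rS_def app11_def)
  qed (simp add: Jr_def rS_def)
qed

end

lemma grp1: fixes a b c d :: "'a::ab_group_add" assumes "-d = a + (b + c)" shows "c = -d - a - b"
proof -
  have "c = (a + (b + c)) - a - b" by (simp add: algebra_simps)
  then show ?thesis by (simp only: assms[symmetric])
qed

context setting begin

lemma fd_app11:
  assumes X: "smooth_on S X" and z: "z \<in> S"
  shows "frechet_derivative (app11 J X) (at z) w =
    J z (frechet_derivative X (at z) w) + (\<Sum>b\<in>Basis. (X z \<bullet> b) *\<^sub>R DD (\<lambda>y. J y b) w z)"
proof -
  have hb: "((\<lambda>y. (X y \<bullet> b) *\<^sub>R J y b) has_derivative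
     (\<lambda>w. (X z \<bullet> b) *\<^sub>R DD (\<lambda>y. J y b) w z + (frechet_derivative X (at z) w \<bullet> b) *\<^sub>R J z b)) (at z)" for b
    using bounded_bilinear.FDERIV[OF bounded_bilinear_scaleR
        bounded_linear.has_derivative[OF bounded_linear_inner_left fdw0[OF smooth_diff[OF X z]]]
        fdw0[OF smooth_diff[OF Jsm z]]] .
  have hs: "((\<lambda>y. \<Sum>b\<in>Basis. (X y \<bullet> b) *\<^sub>R J y b) has_derivative
     (\<lambda>w. \<Sum>b\<in>Basis. (X z \<bullet> b) *\<^sub>R DD (\<lambda>y. J y b) w z + (frechet_derivative X (at z) w \<bullet> b) *\<^sub>R J z b)) (at z)"
    by (rule has_derivative_sum) (rule hb)
  have e: "frechet_derivative (app11 J X) (at z) = frechet_derivative (\<lambda>y. \<Sum>b\<in>Basis. (X y \<bullet> b) *\<^sub>R J y b) (at z)"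
    by (rule fd_cong[OF opn z]) (simp add: app11_def J_expand)
  show ?thesis unfolding e frechet_derivative_at[OF hs, symmetric]
    by (simp add: sum.distrib J_expand[OF z, of "frechet_derivative X (at z) w"])
qed

definition Kt :: "'n cot \<Rightarrow> 'n cot \<Rightarrow> 'n cot" where
  "Kt z u = (\<Sum>b\<in>Basis. (u \<bullet> b) *\<^sub>R DD (\<lambda>y. J y b) (\<rho> z) z)
     - frechet_derivative \<rho> (at z) (J z u) + J z (frechet_derivative \<rho> (at z) u)"

definition K :: "'n vf \<Rightarrow> 'n vf" where "K x = (\<lambda>z. Lr (Jr x) z - Jr (Lr x) z)"

lemma K_tensor: assumes x: "x \<in> V" and z: "z \<in> S" shows "K x z = Kt z (x z)"
proof -
  have "lie \<rho> (Jr x) z = lie \<rho> (app11 J x) z"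
    by (rule lie_cong[OF z]) (simp add: eqS_def Jr_def rS_def)
  then have "Lr (Jr x) z = lie \<rho> (app11 J x) z"
    unfolding Lr_def rS_def using z by simp
  also have "\<dots> = J z (frechet_derivative x (at z) (\<rho> z)) + (\<Sum>b\<in>Basis. (x z \<bullet> b) *\<^sub>R DD (\<lambda>y. J y b) (\<rho> z) z)
      - frechet_derivative \<rho> (at z) (J z (x z))"
    unfolding lie_def fd_app11[OF V_smooth[OF x] z] by (simp add: app11_def)
  finally have 1: "Lr (Jr x) z = \<dots>" .
  have 2: "Jr (Lr x) z = J z (frechet_derivative x (at z) (\<rho> z)) - J z (frechet_derivative \<rho> (at z) (x z))"
    unfolding Jr_def Lr_def rS_def app11_def lie_def using z Jlin[OF z] by (simp add: linear_diff)
  show ?thesis unfolding K_def Kt_def 1 2 by (simp add: algebra_simps)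
qed

lemma K_V[simp]: "x \<in> V \<Longrightarrow> K x \<in> V" unfolding K_def by simp

lemma JK[simp]: "x \<in> V \<Longrightarrow> Jr (K x) = (\<lambda>z. - Jr x z)" unfolding K_def by simp
lemma KJ[simp]: "x \<in> V \<Longrightarrow> K (Jr x) = Jr x" unfolding K_def by simp

lemma K_add: "x \<in> V \<Longrightarrow> y \<in> V \<Longrightarrow> K (\<lambda>z. x z + y z) = (\<lambda>z. K x z + K y z)"
  unfolding K_def by (simp add: algebra_simps)

lemma KK: assumes x: "x \<in> V" shows "K (K x) = x"
proof
  fix z show "K (K x) z = x z"
  proof (cases "z \<in> S")
    case False then show ?thesis using V_zero[OF x False] by (simp add: K_def Lr_def Jr_def rS_def)
  next
    case True
    define y where "y = (\<lambda>z. K x z + x z)"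
    have yV: "y \<in> V" unfolding y_def using x by simp
    have "Jr y z = 0" unfolding y_def using x by simp
    then have "J z (y z) = 0" using True by (simp add: Jr_def rS_def app11_def)
    then obtain u where u: "J z u = y z" using Jker[OF True] by blast
    define c where "c = (\<lambda>z'. if z' \<in> S then u else (0::'n cot))"
    have cV: "c \<in> V"
      by (rule V_I, rule smooth_cong[OF opn smooth_const[of S u]]) (auto simp: c_def)
    have Jc: "Jr c z = y z" using True u by (simp add: Jr_def rS_def app11_def c_def)
    have "K y z = Kt z (y z)" by (rule K_tensor[OF yV True])
    also have "\<dots> = K (Jr c) z" using K_tensor[OF Jr_V[OF cV] True] Jc by simp
    also have "\<dots> = y z" using cV Jc by simp
    finally have "K y z = y z" .
    moreover have "K y z = K (K x) z + K x z" unfolding y_def using K_add[OF K_V[OF x] x] by simp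
    ultimately show ?thesis unfolding y_def by simp
  qed
qed

lemma JLLJ[simp]: assumes x: "x \<in> V"
  shows "Jr (Lr (Lr (Jr x))) = (\<lambda>z. - x z - Lr (Jr x) z - Jr (Lr x) z)"
proof
  fix z
  have "K (K x) z = x z" using KK[OF x] by simp
  then show "Jr (Lr (Lr (Jr x))) z = - x z - Lr (Jr x) z - Jr (Lr x) z"
    unfolding K_def using x by (simp add: algebra_simps eq_neg_iff_add_eq_0 neg_eq_iff_add_eq_0)
qed

end

context setting begin

definition hh :: "'n vf \<Rightarrow> 'n vf" where "hh x = (\<lambda>z. (1/2::real) *\<^sub>R (x z - (Lr (Jr x) z - Jr (Lr x) z)))"
definition vv :: "'n vf \<Rightarrow> 'n vf" where "vv x = (\<lambda>z. (1/2::real) *\<^sub>R (x z + (Lr (Jr x) z - Jr (Lr x) z)))"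
definition DC :: "'n vf \<Rightarrow> 'n vf" where "DC x = (\<lambda>z. hh (Lr (hh x)) z + vv (Lr (vv x)) z)"

lemma goal1: assumes x: "x \<in> V" shows "DC (Jr x) z - Jr (DC x) z = 0"
  unfolding DC_def hh_def vv_def using x
  by (simp add: algebra_simps euclidean_eq_iff[where 'a="'n cot"] inner_simps)

definition FF :: "'n vf \<Rightarrow> 'n vf" where "FF x = (\<lambda>z. hh (\<lambda>z. Lr (hh x) z - hh (Lr x) z) z - Jr x z)"

lemma goal2: assumes x: "x \<in> V" shows "DC (FF x) z - FF (DC x) z = 0"
  unfolding DC_def FF_def hh_def vv_def using x
  by (simp add: algebra_simps euclidean_eq_iff[where 'a="'n cot"] inner_add_left inner_diff_left inner_scaleR_left inner_minus_left)

lemma eqS_lie: "eqS S X x \<Longrightarrow> eqS S (lie \<rho> X) (Lr x)"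
  unfolding eqS_def Lr_def rS_def using lie_cong by (simp add: eqS_def)

lemma eqS_app: "eqS S X x \<Longrightarrow> eqS S (app11 J X) (Jr x)"
  unfolding eqS_def Jr_def rS_def app11_def by simp

lemma eqS_h: assumes "eqS S X x" shows "eqS S (hproj J \<rho> X) (hh x)"
proof -
  have a: "eqS S (lie \<rho> (app11 J X)) (Lr (Jr x))"
    using eqS_lie[OF eqS_app[OF assms]] lie_cong unfolding eqS_def Lr_def rS_def by simp
  have b: "eqS S (app11 J (lie \<rho> X)) (Jr (Lr x))" by (rule eqS_app[OF eqS_lie[OF assms]])
  show ?thesis using a b assms unfolding eqS_def hproj_def hh_def lie_op_def by simp
qed

lemma eqS_v: assumes "eqS S X x" shows "eqS S (vproj J \<rho> X) (vv x)"
proof -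
  have a: "eqS S (lie \<rho> (app11 J X)) (Lr (Jr x))"
    using eqS_lie[OF eqS_app[OF assms]] lie_cong unfolding eqS_def Lr_def rS_def by simp
  have b: "eqS S (app11 J (lie \<rho> X)) (Jr (Lr x))" by (rule eqS_app[OF eqS_lie[OF assms]])
  show ?thesis using a b assms unfolding eqS_def vproj_def vv_def lie_op_def by simp
qed

lemma eqS_D: assumes "eqS S X x" shows "eqS S (dyn_cov J \<rho> X) (DC x)"
proof -
  have a: "eqS S (hproj J \<rho> (lie \<rho> (hproj J \<rho> X))) (hh (Lr (hh x)))"
    by (rule eqS_h, rule eqS_lie, rule eqS_h[OF assms])
  have b: "eqS S (vproj J \<rho> (lie \<rho> (vproj J \<rho> X))) (vv (Lr (vv x)))"
    by (rule eqS_v, rule eqS_lie, rule eqS_v[OF assms])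
  show ?thesis using a b unfolding eqS_def dyn_cov_def DC_def by simp
qed

lemma eqS_F: assumes "eqS S X x" shows "eqS S (Fop J \<rho> X) (FF x)"
proof -
  have a: "eqS S (lie_op \<rho> (hproj J \<rho>) X) (\<lambda>z. Lr (hh x) z - hh (Lr x) z)"
    using eqS_lie[OF eqS_h[OF assms]] eqS_h[OF eqS_lie[OF assms]]
    unfolding eqS_def lie_op_def by simp
  show ?thesis using eqS_h[OF a] assms unfolding eqS_def Fop_def FF_def by (simp add: Jr_def rS_def app11_def)
qed

lemma main_loc:
  assumes X: "smooth_on S X" and z: "z \<in> S"
  shows "dyn_cov11 J \<rho> (app11 J) X z = 0 \<and> dyn_cov11 J \<rho> (Fop J \<rho>) X z = 0"
proof -
  define x where "x = rS X"
  have xV: "x \<in> V" unfolding x_def by (rule rS_V[OF X])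
  have e: "eqS S X x" unfolding eqS_def x_def rS_def by simp
  have 1: "dyn_cov11 J \<rho> (app11 J) X z = DC (Jr x) z - Jr (DC x) z"
    using eqS_D[OF eqS_app[OF e]] eqS_app[OF eqS_D[OF e]] z
    unfolding dyn_cov11_def eqS_def by simp
  have 2: "dyn_cov11 J \<rho> (Fop J \<rho>) X z = DC (FF x) z - FF (DC x) z"
    using eqS_D[OF eqS_F[OF e]] eqS_F[OF eqS_D[OF e]] z
    unfolding dyn_cov11_def eqS_def by simp
  show ?thesis unfolding 1 2 using goal1[OF xV] goal2[OF xV] by simp
qed

end

theorem mainTheorem5:
  fixes S :: "'n::finite cot set" and J :: "'n tens11" and \<rho> :: "'n vf"
  assumes "open S"
    and "S \<subseteq> {z. snd z \<noteq> 0}"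
    and "adapted_almost_tangent S J"
    and "smooth_on S \<rho>"
    and "J_regular S J \<rho>"
  shows "(\<forall>X. smooth_on S X \<longrightarrow> (\<forall>z\<in>S. dyn_cov11 J \<rho> (app11 J) X z = 0))
       \<and> (\<forall>X. smooth_on S X \<longrightarrow> (\<forall>z\<in>S. dyn_cov11 J \<rho> (Fop J \<rho>) X z = 0))"
proof -
  interpret setting S J \<rho> using assms(1,3,4,5) by unfold_locales
  show ?thesis using main_loc by blast
qed

end
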